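(* Let $r\ge 1$ be an integer. For integers $n,k\ge 0$ let $C(n,k,r)$ be the number of compositions of $n$ into $k$ positive parts that have no run of length $\ge r$ (with $C(0,0,r)=1$ counting the empty composition). Then, as formal power series in $x,q$, \[\sum_{n,k\ge 0}C(n,k,r)\,x^nq^k=\frac{1}{1-\frac{xq}{1-x}+q^r\sum_{j\ge 1}\frac{x^{rj}(1-qx^j)}{1-q^rx^{rj}}}.\]
   Context: A composition of $n$ into $k$ parts is an ordered sequence $(a_1,\dots,a_k)$ of positive integers with $a_1+\dots+a_k=n$. A run in a composition is a maximal string of consecutive identical parts; its length is the number of parts in it. For example, $28=3+5+5+5+3+3+4$ has run lengths $1,3,2,1$. *)

theory Defs
  imports "HOL-Computational_Algebra.Formal_Laurent_Series"
begin

function run_lengths :: "'a list \<Rightarrow> nat list" where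
  "run_lengths [] = []"
| "run_lengths (x # xs) =
     Suc (length (takeWhile (\<lambda>y. y = x) xs)) # run_lengths (dropWhile (\<lambda>y. y = x) xs)"
  by pat_completeness auto
termination
  by (relation "measure length") (auto simp: le_imp_less_Suc length_dropWhile_le)

definition compositions :: "nat \<Rightarrow> nat \<Rightarrow> nat list set" where
  "compositions n k = {xs. length xs = k \<and> (\<forall>a\<in>set xs. 0 < a) \<and> sum_list xs = n}"

definition C :: "nat \<Rightarrow> nat \<Rightarrow> nat \<Rightarrow> nat" where
  "C n k r = card {xs \<in> compositions n k. \<forall>l\<in>set (run_lengths xs). l < r}"

(* Bivariate formal power series in x and q are represented as power series in x
   whose coefficients are formal Laurent series in q over the rationals
   (Q[[x,q]] embeds injectively into Q((q))[[x]]); this makes the coefficient ring a field. *)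
definition xx :: "rat fls fps" where "xx = fps_X"
definition qq :: "rat fls fps" where "qq = fps_const fls_X"

definition GF :: "nat \<Rightarrow> rat fls fps" where
  "GF r = Abs_fps (\<lambda>n. Abs_fls (\<lambda>k::int. if 0 \<le> k then of_nat (C n (nat k) r) else 0))"

(* the denominator  1 - xq/(1-x) + q^r sum_{j>=1} x^{rj}(1 - q x^j)/(1 - q^r x^{rj});
   the sum over j converges in the x-adic topology of power series *)
definition Den :: "nat \<Rightarrow> rat fls fps" where
  "Den r = 1 - xx * qq * inverse (1 - xx)
     + qq ^ r * (\<Sum>j. xx ^ (r * Suc j) * (1 - qq * xx ^ Suc j) * inverse (1 - qq ^ r * xx ^ (r * Suc j)))"

end

theory Submission
  imports Defs
begin

definition vld :: "nat \<Rightarrow> nat list \<Rightarrow> bool" where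
  "vld r xs \<longleftrightarrow> (\<forall>l\<in>set (run_lengths xs). l < r)"

definition GS :: "nat \<Rightarrow> nat \<Rightarrow> nat \<Rightarrow> nat list set" where
  "GS r n k = {xs \<in> compositions n k. vld r xs}"

definition VS :: "nat \<Rightarrow> nat \<Rightarrow> nat \<Rightarrow> nat \<Rightarrow> nat list set" where
  "VS r a n k = {xs \<in> GS r n k. xs \<noteq> [] \<and> hd xs = a}"

definition Ca :: "nat \<Rightarrow> nat \<Rightarrow> nat \<Rightarrow> nat \<Rightarrow> nat" where
  "Ca r a n k = card (VS r a n k)"

lemma C_GS: "C n k r = card (GS r n k)"
  by (simp add: C_def GS_def vld_def)

lemma finite_comp: "finite (compositions n k)"
proof -
  have "compositions n k \<subseteq> {xs. set xs \<subseteq> {0..n} \<and> length xs = k}"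
    by (auto simp: compositions_def member_le_sum_list)
  moreover have "finite {xs. set xs \<subseteq> {0..n} \<and> length xs = k}"
    by (rule finite_lists_length_eq) simp
  ultimately show ?thesis by (rule finite_subset)
qed

lemma finite_GS: "finite (GS r n k)"
  unfolding GS_def using finite_comp by simp

lemma finite_VS: "finite (VS r a n k)"
  unfolding VS_def using finite_GS by simp

lemma rl_rep:
  assumes "0 < m" "w = [] \<or> hd w \<noteq> a"
  shows "run_lengths (replicate m a @ w) = m # run_lengths w"
proof -
  obtain m' where m: "m = Suc m'" using assms(1) by (cases m) auto
  have t: "takeWhile (\<lambda>y. y = a) w = []" and d: "dropWhile (\<lambda>y. y = a) w = w"
    using assms(2) by (cases w; auto)+
  have t2: "takeWhile (\<lambda>y. y = a) (replicate m' a @ w) = replicate m' a @ takeWhile (\<lambda>y. y = a) w"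
    by (rule takeWhile_append2) auto
  have d2: "dropWhile (\<lambda>y. y = a) (replicate m' a @ w) = dropWhile (\<lambda>y. y = a) w"
    by (rule dropWhile_append2) auto
  show ?thesis using t d by (simp add: m t2 d2)
qed

lemma rl_decomp:
  fixes w :: "'a list" and a :: 'a
  defines "l \<equiv> length (takeWhile (\<lambda>y. y = a) w)" and "z \<equiv> dropWhile (\<lambda>y. y = a) w"
  shows "w = replicate l a @ z" "z = [] \<or> hd z \<noteq> a"
proof -
  have "replicate l a = takeWhile (\<lambda>y. y = a) w"
    unfolding l_def by (rule replicate_length_same) (auto dest: set_takeWhileD)
  then show "w = replicate l a @ z" unfolding z_def by simp
  show "z = [] \<or> hd z \<noteq> a" unfolding z_def using hd_dropWhile[of "\<lambda>y. y = a" w] by blast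
qed

lemma rl_cons:
  "run_lengths (a # w) = Suc (length (takeWhile (\<lambda>y. y = a) w)) # run_lengths (dropWhile (\<lambda>y. y = a) w)"
  by simp

lemma rl_w:
  "run_lengths w = (if length (takeWhile (\<lambda>y. y = a) w) > 0
     then length (takeWhile (\<lambda>y. y = a) w) # run_lengths (dropWhile (\<lambda>y. y = a) w)
     else run_lengths (dropWhile (\<lambda>y. y = a) w))"
proof -
  note D = rl_decomp[where a=a and w=w]
  show ?thesis
  proof (cases "length (takeWhile (\<lambda>y. y = a) w) > 0")
    case True
    then show ?thesis using rl_rep[OF True D(2)] D(1) by simp
  next
    case False
    then show ?thesis using D(1) by simp
  qed
qed

lemma vld_cons:
  "vld r (a # w) \<longleftrightarrow> Suc (length (takeWhile (\<lambda>y. y = a) w)) < r \<and> vld r (dropWhile (\<lambda>y. y = a) w)"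
  by (simp add: vld_def)

lemma vld_w:
  "vld r w \<longleftrightarrow> (length (takeWhile (\<lambda>y. y = a) w) > 0 \<longrightarrow> length (takeWhile (\<lambda>y. y = a) w) < r)
     \<and> vld r (dropWhile (\<lambda>y. y = a) w)"
  by (subst vld_def, subst rl_w[where a=a]) (auto simp: vld_def)

lemma comp_cons: "0 < a \<Longrightarrow> a # w \<in> compositions n k \<longleftrightarrow> a \<le> n \<and> 1 \<le> k \<and> w \<in> compositions (n - a) (k - 1)"
  by (auto simp: compositions_def)

lemma VS_image:
  assumes "0 < a"
  shows "VS r a n k = (\<lambda>w. a # w) ` {w \<in> GS r (n - a) (k - 1). Suc (length (takeWhile (\<lambda>y. y = a) w)) < r \<and> a \<le> n \<and> 1 \<le> k}"
proof (intro equalityI subsetI)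
  fix xs assume xs: "xs \<in> VS r a n k"
  then obtain w where w: "xs = a # w" unfolding VS_def by (cases xs) auto
  show "xs \<in> (\<lambda>w. a # w) ` {w \<in> GS r (n - a) (k - 1). Suc (length (takeWhile (\<lambda>y. y = a) w)) < r \<and> a \<le> n \<and> 1 \<le> k}"
    using xs assms unfolding w VS_def GS_def
    by (auto simp: comp_cons vld_cons vld_w[where a=a and w=w])
next
  fix xs assume "xs \<in> (\<lambda>w. a # w) ` {w \<in> GS r (n - a) (k - 1). Suc (length (takeWhile (\<lambda>y. y = a) w)) < r \<and> a \<le> n \<and> 1 \<le> k}"
  then obtain w where w: "xs = a # w" "w \<in> GS r (n - a) (k - 1)" "Suc (length (takeWhile (\<lambda>y. y = a) w)) < r" "a \<le> n" "1 \<le> k"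
    by auto
  then show "xs \<in> VS r a n k"
    using assms unfolding VS_def GS_def
    by (auto simp: comp_cons vld_cons vld_w[where a=a and w=w])
qed

lemma card_VS_Good:
  assumes "0 < a"
  shows "Ca r a n k = card {w \<in> GS r (n - a) (k - 1). Suc (length (takeWhile (\<lambda>y. y = a) w)) < r \<and> a \<le> n \<and> 1 \<le> k}"
  unfolding Ca_def VS_image[OF assms] by (rule card_image) (auto simp: inj_on_def)

lemma tw_rep:
  assumes "z = [] \<or> hd z \<noteq> a"
  shows "takeWhile (\<lambda>y. y = a) (replicate m a @ z) = replicate m a"
    "dropWhile (\<lambda>y. y = a) (replicate m a @ z) = z"
proof -
  have t: "takeWhile (\<lambda>y. y = a) z = []" and d: "dropWhile (\<lambda>y. y = a) z = z"
    using assms by (cases z; auto)+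
  have "takeWhile (\<lambda>y. y = a) (replicate m a @ z) = replicate m a @ takeWhile (\<lambda>y. y = a) z"
    by (rule takeWhile_append2) auto
  then show "takeWhile (\<lambda>y. y = a) (replicate m a @ z) = replicate m a" using t by simp
  have "dropWhile (\<lambda>y. y = a) (replicate m a @ z) = dropWhile (\<lambda>y. y = a) z"
    by (rule dropWhile_append2) auto
  then show "dropWhile (\<lambda>y. y = a) (replicate m a @ z) = z" using d by simp
qed

lemma bad1:
  assumes "0 < a" "1 \<le> r" "a \<le> n" "1 \<le> k"
    and w: "w \<in> GS r (n - a) (k - 1)" "\<not> Suc (length (takeWhile (\<lambda>y. y = a) w)) < r"
  shows "r * a \<le> n \<and> r \<le> k \<and> w = replicate (r - 1) a @ dropWhile (\<lambda>y. y = a) w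
     \<and> dropWhile (\<lambda>y. y = a) w \<in> {z \<in> GS r (n - r * a) (k - r). z = [] \<or> hd z \<noteq> a}"
proof -
  define l where "l = length (takeWhile (\<lambda>y. y = a) w)"
  define z where "z = dropWhile (\<lambda>y. y = a) w"
  have D: "w = replicate l a @ z" "z = [] \<or> hd z \<noteq> a"
    using rl_decomp[where a=a and w=w] unfolding l_def z_def by auto
  have vw: "vld r w" and cw: "w \<in> compositions (n - a) (k - 1)" using w(1) by (auto simp: GS_def)
  have vz: "vld r z" and lr: "l > 0 \<longrightarrow> l < r"
    using vw vld_w[where a=a and w=w] unfolding l_def z_def by auto
  have l: "l = r - 1" using lr w(2) assms(2) unfolding l_def[symmetric] by linarith
  have ra: "r * a = (r - 1) * a + a" using assms(2) by (cases r) auto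
  have w2: "w = replicate (r - 1) a @ z" using D(1) l by simp
  have sw: "sum_list w = n - a" and lw: "length w = k - 1" using cw by (auto simp: compositions_def)
  have s: "(r - 1) * a + sum_list z = n - a"
    using sw unfolding w2 by (simp add: sum_list_replicate)
  have len: "(r - 1) + length z = k - 1"
    using lw unfolding w2 by simp
  have sz: "set z \<subseteq> set w" by (simp add: w2)
  have "\<forall>x\<in>set w. 0 < x" using cw by (simp add: compositions_def)
  then have pos: "\<forall>x\<in>set z. 0 < x" using sz by blast
  have c1: "r * a \<le> n" using s ra assms(3) by linarith
  have c2: "r \<le> k" using len assms(2,4) by linarith
  have "sum_list z = n - r * a" using s ra assms(3) by linarith
  moreover have "length z = k - r" using len assms(2,4) by linarith
  ultimately have "z \<in> GS r (n - r * a) (k - r)" using pos vz by (simp add: GS_def compositions_def)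
  then show ?thesis using c1 c2 D l unfolding z_def[symmetric] by auto
qed

lemma bad2:
  assumes "0 < a" "1 \<le> r" "a \<le> n" "1 \<le> k" "r * a \<le> n" "r \<le> k"
    and z: "z \<in> GS r (n - r * a) (k - r)" "z = [] \<or> hd z \<noteq> a"
  shows "replicate (r - 1) a @ z \<in> GS r (n - a) (k - 1) \<and>
    \<not> Suc (length (takeWhile (\<lambda>y. y = a) (replicate (r - 1) a @ z))) < r"
proof -
  have ra: "r * a = (r - 1) * a + a" using assms(2) by (cases r) auto
  have cz: "z \<in> compositions (n - r * a) (k - r)" and vz: "vld r z" using z by (auto simp: GS_def)
  have "replicate (r - 1) a @ z \<in> compositions (n - a) (k - 1)"
    using cz assms ra by (auto simp: compositions_def sum_list_replicate)
  moreover have "vld r (replicate (r - 1) a @ z)"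
  proof (cases "r - 1 = 0")
    case True then show ?thesis using vz by simp
  next
    case False
    then show ?thesis using vz rl_rep[of "r - 1" z a] z(2) by (auto simp: vld_def)
  qed
  ultimately show ?thesis using tw_rep(1)[OF z(2), of "r - 1"] by (auto simp: GS_def)
qed

lemma Ca_le: "Ca r a n k \<le> C n k r"
  unfolding Ca_def C_GS by (rule card_mono[OF finite_GS]) (auto simp: VS_def)

lemma Ca_rec_nat:
  assumes "0 < a" "1 \<le> r" "a \<le> n" "1 \<le> k"
  shows "C (n - a) (k - 1) r = Ca r a n k +
    (if r * a \<le> n \<and> r \<le> k then C (n - r * a) (k - r) r - Ca r a (n - r * a) (k - r) else 0)"
proof -
  let ?A = "GS r (n - a) (k - 1)"
  let ?P = "\<lambda>w. Suc (length (takeWhile (\<lambda>y. y = a) w)) < r"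
  have "card ?A = card ({w \<in> ?A. ?P w} \<union> {w \<in> ?A. \<not> ?P w})"
    by (rule arg_cong[where f=card]) auto
  also have "\<dots> = card {w \<in> ?A. ?P w} + card {w \<in> ?A. \<not> ?P w}"
    by (rule card_Un_disjoint) (auto simp: finite_GS)
  finally have split: "card ?A = card {w \<in> ?A. ?P w} + card {w \<in> ?A. \<not> ?P w}" .
  have good: "Ca r a n k = card {w \<in> ?A. ?P w}"
    using card_VS_Good[OF assms(1), of r n k] assms(3,4) by simp
  have bad: "card {w \<in> ?A. \<not> ?P w} =
     (if r * a \<le> n \<and> r \<le> k then C (n - r * a) (k - r) r - Ca r a (n - r * a) (k - r) else 0)"
  proof (cases "r * a \<le> n \<and> r \<le> k")
    case True
    let ?H = "{z \<in> GS r (n - r * a) (k - r). z = [] \<or> hd z \<noteq> a}"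
    have eq: "{w \<in> ?A. \<not> ?P w} = (\<lambda>z. replicate (r - 1) a @ z) ` ?H"
    proof (intro equalityI subsetI)
      fix w assume "w \<in> {w \<in> ?A. \<not> ?P w}"
      then show "w \<in> (\<lambda>z. replicate (r - 1) a @ z) ` ?H"
        using bad1[OF assms, of w] by (auto intro!: image_eqI)
    next
      fix w assume "w \<in> (\<lambda>z. replicate (r - 1) a @ z) ` ?H"
      then show "w \<in> {w \<in> ?A. \<not> ?P w}" using bad2[OF assms] True by auto
    qed
    have "card {w \<in> ?A. \<not> ?P w} = card ?H"
      unfolding eq by (rule card_image) (auto simp: inj_on_def)
    also have "?H = GS r (n - r * a) (k - r) - VS r a (n - r * a) (k - r)"
      by (auto simp: VS_def)
    also have "card \<dots> = C (n - r * a) (k - r) r - Ca r a (n - r * a) (k - r)"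
      unfolding C_GS Ca_def by (rule card_Diff_subset[OF finite_VS]) (auto simp: VS_def)
    finally show ?thesis using True by simp
  next
    case False
    have e: "{w \<in> ?A. \<not> ?P w} = {}" using False bad1[OF assms] by blast
    show ?thesis unfolding e by (subst if_not_P[OF False]) simp
  qed
  show ?thesis unfolding C_GS[of "n - a"] split good bad by simp
qed

lemma Ca_rec:
  assumes "0 < a" "1 \<le> r"
  shows "(of_nat (Ca r a n k) :: rat) =
    (if a \<le> n \<and> 1 \<le> k then of_nat (C (n - a) (k - 1) r) else 0)
    - (if r * a \<le> n \<and> r \<le> k then of_nat (C (n - r * a) (k - r) r) - of_nat (Ca r a (n - r * a) (k - r)) else 0)"
proof (cases "a \<le> n \<and> 1 \<le> k")
  case True
  have "(of_nat (C (n - a) (k - 1) r) :: rat) = of_nat (Ca r a n k) +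
    (if r * a \<le> n \<and> r \<le> k then of_nat (C (n - r * a) (k - r) r) - of_nat (Ca r a (n - r * a) (k - r)) else 0)"
    using Ca_rec_nat[OF assms True[THEN conjunct1] True[THEN conjunct2]] Ca_le[of r a "n - r * a" "k - r"]
    by (auto simp: of_nat_diff)
  then show ?thesis using True by simp
next
  case False
  have "xs \<in> VS r a n k \<Longrightarrow> a \<le> n \<and> 1 \<le> k" for xs
    by (cases xs) (auto simp: VS_def GS_def compositions_def)
  then have "VS r a n k = {}" using False by blast
  then have "Ca r a n k = 0" unfolding Ca_def by simp
  moreover have h2: "\<not> (r * a \<le> n \<and> r \<le> k)"
  proof
    assume h: "r * a \<le> n \<and> r \<le> k"
    have "a \<le> r * a" using assms(2) by simp
    then show False using h False assms(2) by linarith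
  qed
  ultimately show ?thesis by (subst if_not_P[OF False], subst if_not_P[OF h2]) simp
qed

lemma C_decomp:
  "(of_nat (C n k r) :: rat) = (if n = 0 \<and> k = 0 then 1 else 0) + (\<Sum>a\<in>{1..n}. of_nat (Ca r a n k))"
proof (cases "n = 0 \<and> k = 0")
  case True
  then have "GS r n k = {[]}" by (auto simp: GS_def compositions_def vld_def)
  then show ?thesis using True by (simp add: C_GS)
next
  case False
  have eq: "GS r n k = (\<Union>a\<in>{1..n}. VS r a n k)"
  proof (intro equalityI subsetI)
    fix xs assume xs: "xs \<in> GS r n k"
    then have ne: "xs \<noteq> []" using False by (auto simp: GS_def compositions_def)
    have "hd xs \<in> set xs" using ne by simp
    then have "0 < hd xs" "hd xs \<le> n" using xs by (auto simp: GS_def compositions_def member_le_sum_list)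
    then show "xs \<in> (\<Union>a\<in>{1..n}. VS r a n k)" using xs ne by (auto simp: VS_def)
  qed (auto simp: VS_def)
  have "card (GS r n k) = (\<Sum>a\<in>{1..n}. card (VS r a n k))"
    unfolding eq by (rule card_UN_disjoint) (auto simp: finite_VS, auto simp: VS_def)
  then show ?thesis using False by (simp add: C_GS Ca_def)
qed


definition vanish :: "(nat \<Rightarrow> 'a::comm_ring_1 fps) \<Rightarrow> bool" where
  "vanish f \<longleftrightarrow> (\<forall>j n. n \<le> j \<longrightarrow> f j $ n = 0)"

lemma vanish_sums:
  fixes f :: "nat \<Rightarrow> 'a::comm_ring_1 fps"
  assumes "vanish f"
  shows "f sums Abs_fps (\<lambda>n. \<Sum>j<n. f j $ n)"
  unfolding sums_def
proof (rule tendsto_fpsI)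
  fix n
  have "\<forall>N\<ge>n. (\<Sum>j<N. f j) $ n = Abs_fps (\<lambda>n. \<Sum>j<n. f j $ n) $ n"
  proof (intro allI impI)
    fix N assume N: "n \<le> N"
    have "(\<Sum>j<N. f j) $ n = (\<Sum>j<N. f j $ n)" by (simp add: fps_sum_nth)
    also have "\<dots> = (\<Sum>j<n. f j $ n)"
      by (rule sum.mono_neutral_right) (use N assms in \<open>auto simp: vanish_def\<close>)
    finally show "(\<Sum>j<N. f j) $ n = Abs_fps (\<lambda>n. \<Sum>j<n. f j $ n) $ n" by simp
  qed
  then show "eventually (\<lambda>N. (\<Sum>j<N. f j) $ n = Abs_fps (\<lambda>n. \<Sum>j<n. f j $ n) $ n) sequentially"
    unfolding eventually_sequentially by blast
qed

lemma vanish_suminf_nth: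
  fixes f :: "nat \<Rightarrow> 'a::comm_ring_1 fps"
  assumes "vanish f"
  shows "suminf f $ n = (\<Sum>j<n. f j $ n)"
  by (simp add: sums_unique[OF vanish_sums[OF assms], symmetric])

lemma vanish_mult:
  fixes f :: "nat \<Rightarrow> 'a::comm_ring_1 fps"
  assumes "vanish f"
  shows "vanish (\<lambda>j. c * f j)"
  unfolding vanish_def
proof (intro allI impI)
  fix j n :: nat assume "n \<le> j"
  then show "(c * f j) $ n = 0"
    using assms by (auto simp: fps_mult_nth vanish_def intro!: sum.neutral)
qed

lemma vanish_diff:
  fixes f :: "nat \<Rightarrow> 'a::comm_ring_1 fps"
  assumes "vanish f" "vanish g"
  shows "vanish (\<lambda>j. f j - g j)"
  using assms by (simp add: vanish_def)

lemma suminf_mult_vanish: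
  fixes f :: "nat \<Rightarrow> 'a::comm_ring_1 fps"
  assumes "vanish f"
  shows "c * suminf f = suminf (\<lambda>j. c * f j)"
proof (rule fps_ext)
  fix n
  have "(c * suminf f) $ n = (\<Sum>i=0..n. c $ i * (\<Sum>j<n - i. f j $ (n - i)))"
    by (simp add: fps_mult_nth vanish_suminf_nth[OF assms])
  also have "\<dots> = (\<Sum>i=0..n. c $ i * (\<Sum>j<n. f j $ (n - i)))"
  proof (rule sum.cong[OF refl])
    fix i assume "i \<in> {0..n}"
    have "(\<Sum>j<n - i. f j $ (n - i)) = (\<Sum>j<n. f j $ (n - i))"
      by (rule sum.mono_neutral_left) (use assms in \<open>auto simp: vanish_def\<close>)
    then show "c $ i * (\<Sum>j<n - i. f j $ (n - i)) = c $ i * (\<Sum>j<n. f j $ (n - i))" by simp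
  qed
  also have "\<dots> = (\<Sum>j<n. \<Sum>i=0..n. c $ i * f j $ (n - i))"
    by (simp add: sum_distrib_left sum.swap[where A="{0..n}"])
  also have "\<dots> = suminf (\<lambda>j. c * f j) $ n"
    by (simp add: vanish_suminf_nth[OF vanish_mult[OF assms]] fps_mult_nth)
  finally show "(c * suminf f) $ n = suminf (\<lambda>j. c * f j) $ n" .
qed

lemma suminf_diff_vanish:
  fixes f :: "nat \<Rightarrow> 'a::comm_ring_1 fps"
  assumes "vanish f" "vanish g"
  shows "suminf f - suminf g = suminf (\<lambda>j. f j - g j)"
  by (rule fps_ext) (simp add: vanish_suminf_nth assms vanish_diff sum_subtractf)

lemma vanish_prod_left:
  fixes f :: "'a::comm_ring_1 fps"
  assumes "\<And>i. i \<le> j \<Longrightarrow> f $ i = 0" "n \<le> j"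
  shows "(f * g) $ n = 0"
  using assms by (auto simp: fps_mult_nth intro!: sum.neutral)

definition mk :: "(nat \<Rightarrow> nat \<Rightarrow> rat) \<Rightarrow> rat fls fps" where
  "mk F = Abs_fps (\<lambda>n. Abs_fls (\<lambda>k. if 0 \<le> k then F n (nat k) else 0))"

lemma mk_nth: "fls_nth (mk F $ n) k = (if 0 \<le> k then F n (nat k) else 0)"
proof -
  have "\<forall>\<^sub>\<infinity>m::nat. (\<lambda>k. if 0 \<le> k then F n (nat k) else 0) (- int m) = 0"
    by (rule MOST_nat[THEN iffD2]) (rule exI[of _ 0], auto)
  then show ?thesis by (simp add: mk_def)
qed

lemma GF_mk: "GF r = mk (\<lambda>n k. of_nat (C n k r))"
  by (simp add: GF_def mk_def)

lemma mono_nth: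
  "fls_nth ((fps_const (fls_X ^ j) * (fps_X ^ m * F)) $ n) k = (if n < m then 0 else fls_nth (F $ (n - m)) (k - int j))"
  by (simp add: fps_X_power_mult_nth fls_X_power_times_conv_shift)


lemma fls_sum_nth: "fls_nth (sum f A) k = (\<Sum>i\<in>A. fls_nth (f i) k)"
  by (induction A rule: infinite_finite_induct) auto

definition TT :: "nat \<Rightarrow> rat fls fps" where "TT a = qq * xx ^ a"
definition PP :: "nat \<Rightarrow> nat \<Rightarrow> rat fls fps" where "PP r a = qq ^ r * xx ^ (r * a)"
definition SS :: "nat \<Rightarrow> nat \<Rightarrow> rat fls fps" where
  "SS r a = (TT a - PP r a) * inverse (1 - PP r a)"
definition WA :: "nat \<Rightarrow> nat \<Rightarrow> rat fls fps" where
  "WA r a = mk (\<lambda>n k. of_nat (Ca r a n k))"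

lemma mono_eq: "qq ^ j * xx ^ m * F = fps_const (fls_X ^ j) * (fps_X ^ m * F)"
  by (simp add: qq_def xx_def fps_const_power mult.assoc)

lemma PP_nth: "PP r a $ n = (if n < r * a then 0 else if n = r * a then fls_X ^ r else 0)"
proof -
  have "PP r a = fps_const (fls_X ^ r) * (fps_X ^ (r * a) * 1)"
    using mono_eq[of r "r * a" 1] by (simp add: PP_def)
  then show ?thesis by (simp add: fps_X_power_mult_nth)
qed

lemma TT_nth: "TT a $ n = (if n = a then fls_X else 0)"
proof -
  have "TT a = fps_const (fls_X ^ 1) * (fps_X ^ a * 1)"
    using mono_eq[of 1 a 1] by (simp add: TT_def)
  then show ?thesis by (simp add: fps_X_power_mult_nth)
qed

lemma PP0: "1 \<le> r \<Longrightarrow> 0 < a \<Longrightarrow> (1 - PP r a) $ 0 = 1"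
proof -
  assume "1 \<le> r" "0 < a"
  then have "PP r a $ 0 = 0" using PP_nth[of r a 0] by simp
  then show ?thesis by simp
qed

lemma PPinv: "1 \<le> r \<Longrightarrow> 0 < a \<Longrightarrow> (1 - PP r a) * inverse (1 - PP r a) = 1"
proof -
  assume a: "1 \<le> r" "0 < a"
  have "(1 - PP r a) $ 0 \<noteq> 0" using PP0[OF a] by simp
  then show ?thesis by (rule inverse_mult_eq_1')
qed

lemma WA_rec:
  assumes "1 \<le> r" "0 < a"
  shows "WA r a = TT a * GF r - PP r a * GF r + PP r a * WA r a"
proof (rule fps_ext)
  fix n
  show "WA r a $ n = (TT a * GF r - PP r a * GF r + PP r a * WA r a) $ n"
  proof (rule fls_eqI)
    fix k :: int
    have e1: "TT a * GF r = fps_const (fls_X ^ 1) * (fps_X ^ a * GF r)"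
      using mono_eq[of 1 a "GF r"] by (simp add: TT_def)
    have e2: "PP r a * F = fps_const (fls_X ^ r) * (fps_X ^ (r * a) * F)" for F
      using mono_eq[of r "r * a" F] by (simp add: PP_def)
    show "fls_nth (WA r a $ n) k = fls_nth ((TT a * GF r - PP r a * GF r + PP r a * WA r a) $ n) k"
    proof (cases "0 \<le> k")
      case False
      then show ?thesis
        unfolding e1 e2 fps_add_nth fps_sub_nth fls_plus_nth fls_minus_nth
        unfolding mono_nth WA_def GF_mk mk_nth by simp
    next
      case True
      then obtain k' where k: "k = int k'" by (metis nonneg_int_cases)
      have h1: "(0 \<le> int k' - int j) = (j \<le> k')" for j by auto
      have h2: "nat (int k' - int j) = k' - j" for j by auto
      show ?thesis
        unfolding e1 e2 fps_add_nth fps_sub_nth fls_plus_nth fls_minus_nth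
        unfolding mono_nth WA_def GF_mk mk_nth k h1 h2
        using Ca_rec[OF assms(2,1), of n k'] by (auto simp: not_less)
    qed
  qed
qed

lemma WA_SS:
  assumes "1 \<le> r" "0 < a"
  shows "WA r a = SS r a * GF r"
proof -
  have h: "(1 - PP r a) * WA r a = (TT a - PP r a) * GF r"
  proof -
    have "(1 - PP r a) * WA r a = WA r a - PP r a * WA r a" by (simp add: algebra_simps)
    also have "\<dots> = TT a * GF r - PP r a * GF r" by (subst WA_rec[OF assms]) simp
    finally show ?thesis by (simp add: algebra_simps)
  qed
  have "WA r a = (inverse (1 - PP r a) * (1 - PP r a)) * WA r a"
    using PPinv[OF assms] by (simp add: mult.commute)
  also have "\<dots> = inverse (1 - PP r a) * ((TT a - PP r a) * GF r)"
    by (simp only: mult.assoc h)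
  also have "\<dots> = SS r a * GF r" by (simp add: SS_def mult_ac)
  finally show ?thesis .
qed

lemma Ca0: "n < a \<Longrightarrow> 1 \<le> r \<Longrightarrow> 0 < a \<Longrightarrow> Ca r a n k = 0"
proof -
  assume a: "n < a" "1 \<le> r" "0 < a"
  have "a \<le> r * a" using a by simp
  then have h2: "\<not> (r * a \<le> n \<and> r \<le> k)" using a by linarith
  have h1: "\<not> (a \<le> n \<and> 1 \<le> k)" using a by linarith
  have "(of_nat (Ca r a n k) :: rat) = 0"
    using Ca_rec[OF a(3,2), of n k] by (simp only: if_not_P[OF h1] if_not_P[OF h2])
  then show ?thesis by simp
qed

lemma vanish_WA: "1 \<le> r \<Longrightarrow> vanish (\<lambda>j. WA r (Suc j))"
  unfolding vanish_def
proof (intro allI impI)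
  fix j n :: nat assume "1 \<le> r" "n \<le> j"
  then show "WA r (Suc j) $ n = 0"
    by (intro fls_eqI) (simp add: WA_def mk_nth Ca0)
qed

lemma GF_sum:
  assumes "1 \<le> r"
  shows "GF r = 1 + suminf (\<lambda>j. WA r (Suc j))"
proof (rule fps_ext)
  fix n
  show "GF r $ n = (1 + suminf (\<lambda>j. WA r (Suc j))) $ n"
  proof (rule fls_eqI)
    fix k :: int
    show "fls_nth (GF r $ n) k = fls_nth ((1 + suminf (\<lambda>j. WA r (Suc j))) $ n) k"
    proof (cases "0 \<le> k")
      case False
      then show ?thesis
        unfolding fps_add_nth fls_plus_nth vanish_suminf_nth[OF vanish_WA[OF assms]]
        by (simp add: fls_sum_nth GF_mk mk_nth WA_def)
    next
      case True
      then obtain k' where k: "k = int k'" by (metis nonneg_int_cases)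
      have "(\<Sum>j<n. (of_nat (Ca r (Suc j) n k') :: rat)) = (\<Sum>a=1..n. of_nat (Ca r a n k'))"
        by (rule sum_bounds_lt_plus1)
      then show ?thesis
        using C_decomp[of n k' r]
        unfolding fps_add_nth fls_plus_nth vanish_suminf_nth[OF vanish_WA[OF assms]]
        by (simp add: fls_sum_nth GF_mk mk_nth WA_def k)
    qed
  qed
qed

lemma vanish_SS: "1 \<le> r \<Longrightarrow> vanish (\<lambda>j. SS r (Suc j))"
  unfolding vanish_def SS_def
proof (intro allI impI)
  fix j n :: nat assume r: "1 \<le> r" and n: "n \<le> j"
  have "Suc j \<le> r * Suc j" using mult_le_mono1[of 1 r "Suc j"] r by simp
  then have "\<And>i. i \<le> j \<Longrightarrow> (TT (Suc j) - PP r (Suc j)) $ i = 0"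
    by (simp add: TT_nth PP_nth)
  then show "((TT (Suc j) - PP r (Suc j)) * inverse (1 - PP r (Suc j))) $ n = 0"
    using vanish_prod_left n by blast
qed

lemma inv1X: "inverse (1 - xx) = Abs_fps (\<lambda>_. 1 :: rat fls)"
proof -
  have "inverse (Abs_fps (\<lambda>_. 1 :: rat fls)) * Abs_fps (\<lambda>_. 1) = 1"
    by (rule inverse_mult_eq_1) simp
  then have "(1 - xx) * Abs_fps (\<lambda>_. 1 :: rat fls) = 1"
    by (simp add: fps_inverse_gp' xx_def)
  then show ?thesis by (rule fps_inverse_unique)
qed

lemma vanish_TT: "vanish (\<lambda>j. TT (Suc j))"
  by (simp add: vanish_def TT_nth)

lemma c1: "xx * qq * inverse (1 - xx) = suminf (\<lambda>j. TT (Suc j))"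
proof (rule fps_ext)
  fix n
  have e: "xx * qq * inverse (1 - xx) = fps_const (fls_X ^ 1) * (fps_X ^ 1 * Abs_fps (\<lambda>_. 1 :: rat fls))"
    using mono_eq[of 1 1 "Abs_fps (\<lambda>_. 1 :: rat fls)"] by (simp add: inv1X mult_ac)
  show "(xx * qq * inverse (1 - xx)) $ n = suminf (\<lambda>j. TT (Suc j)) $ n"
    unfolding e vanish_suminf_nth[OF vanish_TT]
    by (cases n) (simp_all add: fps_X_power_mult_nth TT_nth)
qed

definition Vd :: "nat \<Rightarrow> nat \<Rightarrow> rat fls fps" where
  "Vd r j = xx ^ (r * Suc j) * (1 - qq * xx ^ Suc j) * inverse (1 - qq ^ r * xx ^ (r * Suc j))"

lemma vanish_Vd: "1 \<le> r \<Longrightarrow> vanish (Vd r)"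
  unfolding vanish_def
proof (intro allI impI)
  fix j n :: nat assume r: "1 \<le> r" and n: "n \<le> j"
  have "Suc j \<le> r * Suc j" using mult_le_mono1[of 1 r "Suc j"] r by simp
  then have "n < r * Suc j" using n by linarith
  then show "Vd r j $ n = 0"
    unfolding Vd_def xx_def mult.assoc by (simp add: fps_X_power_mult_nth)
qed

lemma c4:
  assumes "1 \<le> r" "0 < a"
  shows "PP r a * (1 - TT a) * inverse (1 - PP r a) = TT a - SS r a"
proof -
  have "TT a - PP r a * (1 - TT a) * inverse (1 - PP r a)
      = TT a * ((1 - PP r a) * inverse (1 - PP r a)) - PP r a * (1 - TT a) * inverse (1 - PP r a)"
    by (simp add: PPinv[OF assms])
  also have "\<dots> = SS r a" by (simp add: SS_def algebra_simps)
  finally show ?thesis by (simp add: algebra_simps)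
qed

lemma Den_eq:
  assumes "1 \<le> r"
  shows "Den r = 1 - suminf (\<lambda>j. SS r (Suc j))"
proof -
  have "qq ^ r * (\<Sum>j. xx ^ (r * Suc j) * (1 - qq * xx ^ Suc j) * inverse (1 - qq ^ r * xx ^ (r * Suc j)))
      = qq ^ r * suminf (Vd r)"
  proof -
    have "Vd r = (\<lambda>j. xx ^ (r * Suc j) * (1 - qq * xx ^ Suc j) * inverse (1 - qq ^ r * xx ^ (r * Suc j)))"
      by (rule ext) (simp only: Vd_def)
    then show ?thesis by (simp only:)
  qed
  also have "\<dots> = suminf (\<lambda>j. qq ^ r * Vd r j)"
    by (rule suminf_mult_vanish[OF vanish_Vd[OF assms]])
  also have "(\<lambda>j. qq ^ r * Vd r j) = (\<lambda>j. TT (Suc j) - SS r (Suc j))"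
  proof
    fix j
    have "qq ^ r * Vd r j = PP r (Suc j) * (1 - TT (Suc j)) * inverse (1 - PP r (Suc j))"
      by (simp add: Vd_def PP_def TT_def mult.assoc)
    then show "qq ^ r * Vd r j = TT (Suc j) - SS r (Suc j)" using c4[OF assms, of "Suc j"] by simp
  qed
  also have "suminf \<dots> = suminf (\<lambda>j. TT (Suc j)) - suminf (\<lambda>j. SS r (Suc j))"
    by (rule suminf_diff_vanish[OF vanish_TT vanish_SS[OF assms], symmetric])
  finally have h: "qq ^ r * (\<Sum>j. xx ^ (r * Suc j) * (1 - qq * xx ^ Suc j) * inverse (1 - qq ^ r * xx ^ (r * Suc j)))
     = suminf (\<lambda>j. TT (Suc j)) - suminf (\<lambda>j. SS r (Suc j))" .
  show ?thesis unfolding Den_def h c1 by simp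
qed

theorem theorem3:
  fixes r :: nat
  assumes "1 \<le> r"
  shows "GF r = inverse (Den r)"
proof -
  have "Den r * GF r = GF r - GF r * suminf (\<lambda>j. SS r (Suc j))"
    by (simp add: Den_eq[OF assms] algebra_simps)
  also have "GF r * suminf (\<lambda>j. SS r (Suc j)) = suminf (\<lambda>j. GF r * SS r (Suc j))"
    by (rule suminf_mult_vanish[OF vanish_SS[OF assms]])
  also have "(\<lambda>j. GF r * SS r (Suc j)) = (\<lambda>j. WA r (Suc j))"
    using WA_SS[OF assms] by (simp add: mult.commute)
  also have "GF r - suminf (\<lambda>j. WA r (Suc j)) = 1"
    using GF_sum[OF assms] by simp
  finally have "Den r * GF r = 1" .
  then show ?thesis by (rule fps_inverse_unique[symmetric])
qed

end
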